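(* Let $\mathbf S=\langle S,+,0,\mathscr F\rangle$ be a semilattice with operators, let $I$ be an arbitrary index set, and let $\chi,\gamma$ and $\zeta_i$ ($i\in I$) be congruences on $\mathbf S$. For $\theta\in\operatorname{Con}\mathbf S$ let $\eta(\theta)$ and $\tau(\theta)$ be the least and greatest congruences with the same $0$-class as $\theta$. If $\eta(\chi)\le\gamma$ and $\bigwedge_{i\in I}\tau(\zeta_i)\le\tau(\gamma)$, then \[ \eta\Big(\eta(\chi)\vee\bigwedge_{i\in I}\tau(\chi\wedge\zeta_i)\Big)\le\gamma. \]
   Context: A semilattice with operators is a join semilattice $(S,+)$ with least element $0$ together with a set $\mathscr F$ of unary maps preserving $+$ and $0$; congruences are equivalence relations compatible with $+$ and all $f\in\mathscr F$, ordered by inclusion. If $J$ is the $0$-class of $\theta$, then $x\,\eta(\theta)\,y$ iff $x+j=y+j$ for some $j\in J$, and $x\,\tau(\theta)\,y$ iff for every $h$ in the monoid generated by $\mathscr F$ (including the identity), $h(x)\in J\Leftrightarrow h(y)\in J$. *)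

theory Defs
  imports Main
begin

text \<open>A semilattice with operators: the join semilattice with least element is the
type 'a (class bounded_semilattice_sup_bot, join = sup, 0 = bot), and F is the set of
operators, each preserving sup and bot.\<close>

definition sl_operators :: "('a::bounded_semilattice_sup_bot \<Rightarrow> 'a) set \<Rightarrow> bool" where
  "sl_operators F \<longleftrightarrow> (\<forall>f\<in>F. (\<forall>x y. f (sup x y) = sup (f x) (f y)) \<and> f bot = bot)"

definition congruence :: "('a::bounded_semilattice_sup_bot \<Rightarrow> 'a) set \<Rightarrow> 'a rel \<Rightarrow> bool" where
  "congruence F \<theta> \<longleftrightarrow> equiv UNIV \<theta>
     \<and> (\<forall>x y u v. (x, y) \<in> \<theta> \<longrightarrow> (u, v) \<in> \<theta> \<longrightarrow> (sup x u, sup y v) \<in> \<theta>)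
     \<and> (\<forall>f\<in>F. \<forall>x y. (x, y) \<in> \<theta> \<longrightarrow> (f x, f y) \<in> \<theta>)"

inductive_set gen_monoid :: "('a \<Rightarrow> 'a) set \<Rightarrow> ('a \<Rightarrow> 'a) set" for F where
  gen_id: "id \<in> gen_monoid F"
| gen_comp: "f \<in> F \<Longrightarrow> h \<in> gen_monoid F \<Longrightarrow> f \<circ> h \<in> gen_monoid F"

definition zero_class :: "'a::bounded_semilattice_sup_bot rel \<Rightarrow> 'a set" where
  "zero_class \<theta> = {x. (x, bot) \<in> \<theta>}"

definition eta :: "'a::bounded_semilattice_sup_bot rel \<Rightarrow> 'a rel" where
  "eta \<theta> = {(x, y). \<exists>j\<in>zero_class \<theta>. sup x j = sup y j}"

definition tau :: "('a::bounded_semilattice_sup_bot \<Rightarrow> 'a) set \<Rightarrow> 'a rel \<Rightarrow> 'a rel" where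
  "tau F \<theta> = {(x, y). \<forall>h\<in>gen_monoid F. (h x \<in> zero_class \<theta> \<longleftrightarrow> h y \<in> zero_class \<theta>)}"

definition con_join :: "('a::bounded_semilattice_sup_bot \<Rightarrow> 'a) set \<Rightarrow> 'a rel \<Rightarrow> 'a rel \<Rightarrow> 'a rel" where
  "con_join F \<alpha> \<beta> = \<Inter>{\<theta>. congruence F \<theta> \<and> \<alpha> \<union> \<beta> \<subseteq> \<theta>}"

end

theory Submission
  imports Defs
begin

inductive_set reach :: "'a::bounded_semilattice_sup_bot set \<Rightarrow> 'a rel \<Rightarrow> 'a set" for K T where
  r0: "bot \<in> reach K T"
| r1: "c \<in> reach K T \<Longrightarrow> k \<in> K \<Longrightarrow> sup c k \<in> reach K T"
| r2: "c \<in> reach K T \<Longrightarrow> (c, d) \<in> T \<Longrightarrow> c \<le> d \<Longrightarrow> d \<in> reach K T"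

lemma gm_hom:
  assumes "sl_operators F" "h \<in> gen_monoid F"
  shows "(\<forall>x y. h (sup x y) = sup (h x) (h y)) \<and> h (bot::'a::bounded_semilattice_sup_bot) = bot"
  using assms(2) by induction (use assms(1) in \<open>auto simp: sl_operators_def\<close>)

lemma gm_sup: "sl_operators F \<Longrightarrow> h \<in> gen_monoid F \<Longrightarrow> h (sup x y) = sup (h x) (h y)"
  using gm_hom by blast

lemma gm_bot: "sl_operators F \<Longrightarrow> h \<in> gen_monoid F \<Longrightarrow> h (bot::'a::bounded_semilattice_sup_bot) = bot"
  using gm_hom by blast

lemma gm_comp: "h \<in> gen_monoid F \<Longrightarrow> g \<in> gen_monoid F \<Longrightarrow> h \<circ> g \<in> gen_monoid F"
  by (induction rule: gen_monoid.induct) (auto simp: comp_assoc intro: gen_monoid.intros)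

lemma gm_F: "f \<in> F \<Longrightarrow> f \<in> gen_monoid F"
  using gen_monoid.gen_comp[OF _ gen_monoid.gen_id, of f F] by simp

lemma gm_mono:
  assumes "sl_operators F" "h \<in> gen_monoid F" "x \<le> (y::'a::bounded_semilattice_sup_bot)"
  shows "h x \<le> h y"
proof -
  have "y = sup x y" using assms(3) by (simp add: sup_absorb2)
  then have "h y = sup (h x) (h y)" using gm_sup[OF assms(1,2)] by metis
  then show ?thesis by (metis sup_ge1)
qed

lemma cong_gm:
  assumes "congruence F \<theta>" "h \<in> gen_monoid F" "(x, y) \<in> \<theta>"
  shows "(h x, h y) \<in> \<theta>"
  using assms(2,3)
proof (induction arbitrary: x y rule: gen_monoid.induct)
  case gen_id then show ?case by simp
next
  case (gen_comp f h) then show ?case using assms(1) by (auto simp: congruence_def)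
qed

lemma cong_refl: "congruence F \<theta> \<Longrightarrow> (x, x) \<in> \<theta>"
  by (auto simp: congruence_def equiv_def refl_on_def)
lemma cong_sym: "congruence F \<theta> \<Longrightarrow> (x, y) \<in> \<theta> \<Longrightarrow> (y, x) \<in> \<theta>"
  by (auto simp: congruence_def equiv_def sym_def)
lemma cong_trans: "congruence F \<theta> \<Longrightarrow> (x, y) \<in> \<theta> \<Longrightarrow> (y, z) \<in> \<theta> \<Longrightarrow> (x, z) \<in> \<theta>"
  unfolding congruence_def equiv_def trans_def by blast
lemma cong_sup: "congruence F \<theta> \<Longrightarrow> (x, y) \<in> \<theta> \<Longrightarrow> (u, v) \<in> \<theta> \<Longrightarrow> (sup x u, sup y v) \<in> \<theta>"
  unfolding congruence_def by blast

lemma zc_sup: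
  fixes a b :: "'a::bounded_semilattice_sup_bot"
  assumes c: "congruence F \<theta>"
  shows "sup a b \<in> zero_class \<theta> \<longleftrightarrow> a \<in> zero_class \<theta> \<and> b \<in> zero_class \<theta>"
proof
  assume h: "sup a b \<in> zero_class \<theta>"
  have hb: "(sup a b, bot) \<in> \<theta>" using h by (simp add: zero_class_def)
  have "(sup a (sup a b), sup a bot) \<in> \<theta>"
    using cong_sup[OF c cong_refl[OF c] hb] .
  then have "(sup a b, a) \<in> \<theta>" by (simp add: sup_assoc[symmetric])
  then have a: "(a, bot) \<in> \<theta>" using cong_trans[OF c cong_sym[OF c] hb] by blast
  have "(sup b (sup a b), sup b bot) \<in> \<theta>"
    using cong_sup[OF c cong_refl[OF c] hb] .
  moreover have "sup b (sup a b) = sup a b" by (simp add: sup_assoc[symmetric] sup_commute[of b a])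
  ultimately have "(sup a b, b) \<in> \<theta>" by simp
  then have b: "(b, bot) \<in> \<theta>" using cong_trans[OF c cong_sym[OF c] hb] by blast
  show "a \<in> zero_class \<theta> \<and> b \<in> zero_class \<theta>" using a b by (simp add: zero_class_def)
next
  assume "a \<in> zero_class \<theta> \<and> b \<in> zero_class \<theta>"
  then show "sup a b \<in> zero_class \<theta>"
    using cong_sup[OF c, of a bot b bot] by (simp add: zero_class_def)
qed

lemma zc_down:
  fixes a b :: "'a::bounded_semilattice_sup_bot"
  assumes "congruence F \<theta>" "b \<in> zero_class \<theta>" "a \<le> b"
  shows "a \<in> zero_class \<theta>"
  using zc_sup[OF assms(1), of a b] assms(2,3) by (simp add: sup_absorb2)

lemma zc_gm:
  assumes "sl_operators F" "congruence F \<theta>" "h \<in> gen_monoid F" "x \<in> zero_class \<theta>"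
  shows "h x \<in> zero_class \<theta>"
  using cong_gm[OF assms(2,3), of x bot] assms gm_bot[OF assms(1,3)] by (simp add: zero_class_def)

lemma tau_compat:
  assumes "sl_operators F" "congruence F \<theta>" "(x, y) \<in> tau F \<theta>" "g \<in> gen_monoid F"
  shows "(sup (g x) w, sup (g y) w) \<in> tau F \<theta>"
  unfolding tau_def
proof (clarify)
  fix h assume h: "h \<in> gen_monoid F"
  have hg: "h \<circ> g \<in> gen_monoid F" using gm_comp[OF h assms(4)] .
  have e: "(h (g x) \<in> zero_class \<theta>) = (h (g y) \<in> zero_class \<theta>)"
    using assms(3) hg unfolding tau_def by auto
  show "(h (sup (g x) w) \<in> zero_class \<theta>) = (h (sup (g y) w) \<in> zero_class \<theta>)"
    using e by (simp add: gm_sup[OF assms(1) h] zc_sup[OF assms(2)])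
qed

lemma cong_inter: assumes a: "congruence F A" and b: "congruence F B"
  shows "congruence F (A \<inter> B)"
  unfolding congruence_def equiv_def
proof (intro conjI)
  show "refl_on UNIV (A \<inter> B)" using cong_refl[OF a] cong_refl[OF b] by (auto simp: refl_on_def)
  show "A \<inter> B \<subseteq> UNIV \<times> UNIV" by simp
  show "sym (A \<inter> B)" using cong_sym[OF a] cong_sym[OF b] by (auto simp: sym_def)
  show "trans (A \<inter> B)" unfolding trans_def using cong_trans[OF a] cong_trans[OF b] by blast
  show "\<forall>x y u v. (x, y) \<in> A \<inter> B \<longrightarrow> (u, v) \<in> A \<inter> B \<longrightarrow> (sup x u, sup y v) \<in> A \<inter> B"
    using cong_sup[OF a] cong_sup[OF b] by blast
  show "\<forall>f\<in>F. \<forall>x y. (x, y) \<in> A \<inter> B \<longrightarrow> (f x, f y) \<in> A \<inter> B"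
    using a b unfolding congruence_def by blast
qed

theorem theorem7p1:
  fixes F :: "('a::bounded_semilattice_sup_bot \<Rightarrow> 'a) set"
    and I :: "'i set"
    and \<chi> \<gamma> :: "'a rel"
    and \<zeta> :: "'i \<Rightarrow> 'a rel"
  assumes "sl_operators F"
    and "congruence F \<chi>" and "congruence F \<gamma>"
    and "\<forall>i\<in>I. congruence F (\<zeta> i)"
    and "eta \<chi> \<subseteq> \<gamma>"
    and "(\<Inter>i\<in>I. tau F (\<zeta> i)) \<subseteq> tau F \<gamma>"
  shows "eta (con_join F (eta \<chi>) (\<Inter>i\<in>I. tau F (\<chi> \<inter> \<zeta> i))) \<subseteq> \<gamma>"
proof -
  note sl = assms(1) and cx = assms(2) and cg = assms(3)
  define K where "K = zero_class \<chi>"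
  define L where "L = zero_class \<gamma>"
  define N where "N = {x. \<forall>i\<in>I. x \<notin> zero_class (\<zeta> i)}"
  define T where "T = (\<Inter>i\<in>I. tau F (\<chi> \<inter> \<zeta> i))"
  define M where "M = gen_monoid F"
  have czi: "congruence F (\<chi> \<inter> \<zeta> i)" if "i \<in> I" for i
    using cong_inter[OF cx] assms(4) that by blast
  have zci: "zero_class (\<chi> \<inter> \<zeta> i) = K \<inter> zero_class (\<zeta> i)" for i
    by (auto simp: zero_class_def K_def)
  have KL: "K \<subseteq> L"
  proof
    fix k assume "k \<in> K"
    then have "(k, bot) \<in> eta \<chi>" unfolding eta_def K_def by (auto intro!: bexI[where x=k])
    then show "k \<in> L" using assms(5) by (auto simp: L_def zero_class_def)
  qed
  have idM: "id \<in> M" by (simp add: M_def gen_monoid.gen_id)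
  have inv: "\<forall>g\<in>M. g c \<in> K \<union> (L \<inter> N)" if "c \<in> reach K T" for c
    using that
  proof (induction rule: reach.induct)
    case r0
    then show ?case using gm_bot[OF sl] cong_refl[OF cx] by (fastforce simp: M_def K_def zero_class_def)
  next
    case (r1 c k)
    show ?case
    proof
      fix g assume g: "g \<in> M"
      have gk: "g k \<in> K" using zc_gm[OF sl cx, of g k] g r1(2) by (simp add: M_def K_def)
      have eq: "g (sup c k) = sup (g c) (g k)" using gm_sup[OF sl] g by (simp add: M_def)
      have "g c \<in> K \<union> (L \<inter> N)" using r1(3) g by blast
      then show "g (sup c k) \<in> K \<union> (L \<inter> N)"
      proof
        assume "g c \<in> K" then show ?thesis using gk eq zc_sup[OF cx] by (simp add: K_def)
      next
        assume a: "g c \<in> L \<inter> N"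
        have "g (sup c k) \<in> L" using a gk KL eq zc_sup[OF cg] by (auto simp: L_def)
        moreover have "g (sup c k) \<in> N"
          using a eq zc_down[OF assms(4)[rule_format]] unfolding N_def by (auto intro: sup_ge1)
        ultimately show ?thesis by blast
      qed
    qed
  next
    case (r2 c d)
    have Tcd: "\<forall>i\<in>I. \<forall>h\<in>M. (h c \<in> K \<inter> zero_class (\<zeta> i)) = (h d \<in> K \<inter> zero_class (\<zeta> i))"
      using r2(2) by (auto simp: T_def tau_def zci M_def)
    have upN: "b \<in> N" if "a \<in> N" "a \<le> b" for a b
      using that zc_down[OF assms(4)[rule_format]] unfolding N_def by blast
    show ?case
    proof
      fix g assume g: "g \<in> M"
      show "g d \<in> K \<union> (L \<inter> N)"
      proof (cases "g d \<in> K")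
        case True then show ?thesis by blast
      next
        case False
        have gcd: "g c \<le> g d" using gm_mono[OF sl _ r2(3)] g by (simp add: M_def)
        have gcLN: "g c \<in> L \<inter> N"
        proof -
          have "g c \<in> K \<union> (L \<inter> N)" using r2(4) g by blast
          then show ?thesis
          proof
            assume gcK: "g c \<in> K"
            have "g c \<in> N" using Tcd g False gcK unfolding N_def by blast
            then show ?thesis using gcK KL by blast
          qed
        qed
        have gdN: "g d \<in> N" using upN gcLN gcd by blast
        have pair: "(g c, g d) \<in> (\<Inter>i\<in>I. tau F (\<zeta> i))"
        proof (clarsimp simp: tau_def)
          fix i h assume i: "i \<in> I" and h: "h \<in> gen_monoid F"
          have hg: "h \<circ> g \<in> M" using gm_comp[OF h] g by (simp add: M_def)
          have hmono: "h (g c) \<le> h (g d)" using gm_mono[OF sl h gcd] .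
          have "h (g c) \<in> K \<union> (L \<inter> N)" using r2(4) hg by auto
          then show "(h (g c) \<in> zero_class (\<zeta> i)) = (h (g d) \<in> zero_class (\<zeta> i))"
          proof
            assume "h (g c) \<in> L \<inter> N"
            then have "h (g c) \<in> N" "h (g d) \<in> N" using upN hmono by auto
            then show ?thesis using i unfolding N_def by blast
          next
            assume hK: "h (g c) \<in> K"
            show ?thesis
            proof (cases "h (g d) \<in> K")
              case True
              have "((h \<circ> g) c \<in> K \<inter> zero_class (\<zeta> i)) = ((h \<circ> g) d \<in> K \<inter> zero_class (\<zeta> i))"
                using Tcd i hg by blast
              then show ?thesis using True hK by simp
            next
              case False2: False
              have "((h \<circ> g) c \<in> K \<inter> zero_class (\<zeta> i)) = ((h \<circ> g) d \<in> K \<inter> zero_class (\<zeta> i))"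
                using Tcd i hg by blast
              then have "h (g c) \<notin> zero_class (\<zeta> i)" using hK False2 by simp
              moreover have "h (g d) \<notin> zero_class (\<zeta> i)"
                using calculation zc_down[OF assms(4)[rule_format, OF i] _ hmono] by blast
              ultimately show ?thesis by blast
            qed
          qed
        qed
        then have "(g c, g d) \<in> tau F \<gamma>" using assms(6) by blast
        then have "g d \<in> L" using gcLN gen_monoid.gen_id unfolding tau_def L_def by fastforce
        then show ?thesis using gdN by blast
      qed
    qed
  qed
  have RL: "c \<in> L" if "c \<in> reach K T" for c
  proof -
    have "id c \<in> K \<union> (L \<inter> N)" using inv[OF that] idM by blast
    then show ?thesis using KL by auto
  qed
  define D where "D = {x. \<exists>r\<in>reach K T. x \<le> r}"
  have DL: "D \<subseteq> L" using RL zc_down[OF cg] by (auto simp: D_def L_def)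
  define \<theta> where "\<theta> = {(x, y). \<forall>g\<in>M. \<forall>z. sup (g x) z \<in> D \<longleftrightarrow> sup (g y) z \<in> D}"
  have Tc: "(sup (g x) w, sup (g y) w) \<in> T" if "(x, y) \<in> T" "g \<in> M" for x y g w
    using that tau_compat[OF sl czi] by (auto simp: T_def M_def)
  have cth: "congruence F \<theta>"
    unfolding congruence_def
  proof (intro conjI)
    show "equiv UNIV \<theta>" unfolding equiv_def refl_on_def sym_def trans_def \<theta>_def by auto
    show "\<forall>x y u v. (x, y) \<in> \<theta> \<longrightarrow> (u, v) \<in> \<theta> \<longrightarrow> (sup x u, sup y v) \<in> \<theta>"
    proof (intro allI impI)
      fix x y u v assume xy: "(x, y) \<in> \<theta>" and uv: "(u, v) \<in> \<theta>"
      show "(sup x u, sup y v) \<in> \<theta>" unfolding \<theta>_def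
      proof (clarify)
        fix g z assume g: "g \<in> M"
        have s: "\<And>a b. g (sup a b) = sup (g a) (g b)" using gm_sup[OF sl] g by (simp add: M_def)
        have "sup (g (sup x u)) z \<in> D \<longleftrightarrow> sup (g x) (sup (g u) z) \<in> D" by (simp add: s sup_assoc)
        also have "\<dots> \<longleftrightarrow> sup (g y) (sup (g u) z) \<in> D" using xy g unfolding \<theta>_def by blast
        also have "\<dots> \<longleftrightarrow> sup (g u) (sup (g y) z) \<in> D" by (simp add: sup_left_commute)
        also have "\<dots> \<longleftrightarrow> sup (g v) (sup (g y) z) \<in> D" using uv g unfolding \<theta>_def by blast
        also have "\<dots> \<longleftrightarrow> sup (g (sup y v)) z \<in> D" by (simp add: s sup_assoc sup_left_commute)
        finally show "sup (g (sup x u)) z \<in> D \<longleftrightarrow> sup (g (sup y v)) z \<in> D" .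
      qed
    qed
    show "\<forall>f\<in>F. \<forall>x y. (x, y) \<in> \<theta> \<longrightarrow> (f x, f y) \<in> \<theta>"
    proof (intro ballI allI impI)
      fix f x y assume f: "f \<in> F" and xy: "(x, y) \<in> \<theta>"
      show "(f x, f y) \<in> \<theta>" unfolding \<theta>_def
      proof (clarify)
        fix g z assume g: "g \<in> M"
        have "g \<circ> f \<in> M" using gm_comp[OF _ gm_F[OF f]] g by (simp add: M_def)
        then show "sup (g (f x)) z \<in> D \<longleftrightarrow> sup (g (f y)) z \<in> D" using xy unfolding \<theta>_def by auto
      qed
    qed
  qed
  have eta_th: "eta \<chi> \<subseteq> \<theta>"
  proof (clarsimp simp: eta_def)
    fix x y j assume j: "j \<in> zero_class \<chi>" and e: "sup x j = sup y j"
    have imp: "sup (g b) z \<in> D" if "sup (g a) z \<in> D" "sup a j = sup b j" "g \<in> M" for a b g z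
    proof -
      note P = that
      obtain r where r: "r \<in> reach K T" "sup (g a) z \<le> r" using P(1) by (auto simp: D_def)
      have gk: "g j \<in> K" using zc_gm[OF sl cx, of g j] that(3) j by (simp add: M_def K_def)
      have s: "\<And>a b. g (sup a b) = sup (g a) (g b)" using gm_sup[OF sl] that(3) by (simp add: M_def)
      have "sup (g b) z \<le> sup (g (sup b j)) z" by (simp add: s le_supI1)
      also have "\<dots> = sup (sup (g a) z) (g j)" using that(2)[symmetric] s by (simp add: sup_assoc sup_commute sup_left_commute)
      also have "\<dots> \<le> sup r (g j)" using r(2) by (simp add: le_supI1)
      finally show ?thesis using reach.r1[OF r(1) gk] by (auto simp: D_def)
    qed
    show "(x, y) \<in> \<theta>" unfolding \<theta>_def using imp e by auto
  qed
  have T_th: "T \<subseteq> \<theta>"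
  proof (clarify)
    fix x y assume xy: "(x, y) \<in> T"
    have imp: "sup (g b) z \<in> D" if "sup (g a) z \<in> D" "(a, b) \<in> T" "g \<in> M" for a b g z
    proof -
      note P = that
      obtain r where r: "r \<in> reach K T" "sup (g a) z \<le> r" using P(1) by (auto simp: D_def)
      have "(sup (g a) (sup z r), sup (g b) (sup z r)) \<in> T" using Tc[OF that(2,3)] .
      moreover have "sup (g a) (sup z r) = r" using r(2) by (simp add: sup_assoc[symmetric] sup_absorb2)
      ultimately have "(r, sup (g b) (sup z r)) \<in> T" by simp
      then have "sup (g b) (sup z r) \<in> reach K T" using reach.r2[OF r(1)] by (simp add: le_supI2)
      moreover have "sup (g b) z \<le> sup (g b) (sup z r)" by (simp add: le_supI2)
      ultimately show ?thesis unfolding D_def by blast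
    qed
    have Tsym: "(y, x) \<in> T"
    proof -
      have "\<forall>i\<in>I. (y, x) \<in> tau F (\<chi> \<inter> \<zeta> i)" using xy by (auto simp: T_def tau_def)
      then show ?thesis by (simp add: T_def)
    qed
    show "(x, y) \<in> \<theta>" unfolding \<theta>_def using imp xy Tsym by blast
  qed
  have psi: "con_join F (eta \<chi>) T \<subseteq> \<theta>"
    unfolding con_join_def using cth eta_th T_th by blast
  have zpsi: "zero_class (con_join F (eta \<chi>) T) \<subseteq> L"
  proof
    fix x assume "x \<in> zero_class (con_join F (eta \<chi>) T)"
    then have "(x, bot) \<in> \<theta>" using psi by (auto simp: zero_class_def)
    then have "sup (id x) bot \<in> D \<longleftrightarrow> sup (id bot) bot \<in> D" using idM unfolding \<theta>_def by blast
    moreover have "bot \<in> D" using reach.r0 by (auto simp: D_def)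
    ultimately have "x \<in> D" by simp
    then show "x \<in> L" using DL by blast
  qed
  show ?thesis
    unfolding T_def[symmetric]
  proof (rule subrelI)
    fix x y assume "(x, y) \<in> eta (con_join F (eta \<chi>) T)"
    then obtain j where j: "j \<in> zero_class (con_join F (eta \<chi>) T)" and e: "sup x j = sup y j"
      unfolding eta_def by blast
    have jb: "(j, bot) \<in> \<gamma>" using j zpsi by (auto simp: L_def zero_class_def)
    have "(sup x j, sup x bot) \<in> \<gamma>" using cong_sup[OF cg cong_refl[OF cg] jb] .
    then have a: "(x, sup x j) \<in> \<gamma>" using cong_sym[OF cg] by simp
    have "(sup y j, sup y bot) \<in> \<gamma>" using cong_sup[OF cg cong_refl[OF cg] jb] .
    then have b: "(sup y j, y) \<in> \<gamma>" by simp
    show "(x, y) \<in> \<gamma>" using cong_trans[OF cg a] b e by simp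
  qed
qed

end
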